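(* Let $\mathcal C\subseteq\mathbf F_q^n$ be a formally self-orthogonal linear $[n,k,d]$ code. Then for each $1\le i\le n$, either $\mathcal P_i=\{(c,0):c\in\mathcal P_{i-1}\}$ or $\mathcal F_{i-1}=\{(0,c):c\in\mathcal F_i\}$. Equivalently, $\dim\mathcal P_{i-1}=\dim\mathcal P_i$ or $\dim\mathcal F_{i-1}=\dim\mathcal F_i$.
   Context: The coordinate order is fixed. Define $\mathcal P_0=\mathcal F_n=0$, $\mathcal P_n=\mathcal F_0=\mathcal C$, and for $1\le i\le n-1$, $\mathcal P_i=\{(c_1,\dots,c_i):(c_1,\dots,c_i,0,\dots,0)\in\mathcal C\}\subseteq\mathbf F_q^i$ and $\mathcal F_i=\{(c_{i+1},\dots,c_n):(0,\dots,0,c_{i+1},\dots,c_n)\in\mathcal C\}\subseteq\mathbf F_q^{n-i}$. A code $\mathcal C$ is formally self-orthogonal if there is an $n$-tuple $\mathbf x$ of nonzero elements of $\mathbf F_q$ with $\mathcal C\subseteq\mathbf x*\mathcal C^\perp$, where $*$ is coordinate-wise multiplication and $\mathcal C^\perp$ is the dual code under the standard inner product. *)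

theory Defs
  imports Main
begin

definition vecs :: "nat \<Rightarrow> 'a list set" where
  "vecs m = {v. length v = m}"

definition zero_vec :: "nat \<Rightarrow> 'a::zero list" where
  "zero_vec m = replicate m 0"

definition vadd :: "'a::plus list \<Rightarrow> 'a list \<Rightarrow> 'a list" where
  "vadd u v = map2 (+) u v"

definition smult_vec :: "'a::times \<Rightarrow> 'a list \<Rightarrow> 'a list" where
  "smult_vec a v = map ((*) a) v"

definition cmult :: "'a::times list \<Rightarrow> 'a list \<Rightarrow> 'a list" where
  "cmult x y = map2 (*) x y"

definition dot :: "'a::comm_semiring_1 list \<Rightarrow> 'a list \<Rightarrow> 'a" where
  "dot u v = sum_list (map2 (*) u v)"

definition linear_code :: "nat \<Rightarrow> 'a::field list set \<Rightarrow> bool" where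
  "linear_code n C \<longleftrightarrow> C \<subseteq> vecs n \<and> zero_vec n \<in> C \<and>
     (\<forall>u\<in>C. \<forall>v\<in>C. vadd u v \<in> C) \<and> (\<forall>a. \<forall>v\<in>C. smult_vec a v \<in> C)"

definition hamming_wt :: "'a::zero list \<Rightarrow> nat" where
  "hamming_wt v = length (filter (\<lambda>x. x \<noteq> 0) v)"

text \<open>[n,k,d] linear code over the finite field 'a (q = card UNIV):
  dimension k (equivalently |C| = q^k) and minimum distance d
  (minimum weight of a nonzero codeword; only required when C is nonzero).\<close>
definition nkd_code :: "nat \<Rightarrow> nat \<Rightarrow> nat \<Rightarrow> 'a::{finite,field} list set \<Rightarrow> bool" where
  "nkd_code n k d C \<longleftrightarrow> linear_code n C \<and> card C = card (UNIV :: 'a set) ^ k \<and>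
     (k > 0 \<longrightarrow> d = Min (hamming_wt ` (C - {zero_vec n})))"

definition dual_code :: "nat \<Rightarrow> 'a::field list set \<Rightarrow> 'a list set" where
  "dual_code n C = {y \<in> vecs n. \<forall>c\<in>C. dot c y = 0}"

definition formally_self_orthogonal :: "nat \<Rightarrow> 'a::field list set \<Rightarrow> bool" where
  "formally_self_orthogonal n C \<longleftrightarrow>
     (\<exists>x. length x = n \<and> (\<forall>j<n. x ! j \<noteq> 0) \<and> C \<subseteq> cmult x ` dual_code n C)"

text \<open>Shortened codes P_i (prefixes) and F_i (suffixes), as in the paper:
  P_0 = F_n = 0, P_n = F_0 = C.\<close>
definition Pcode :: "nat \<Rightarrow> 'a::zero list set \<Rightarrow> nat \<Rightarrow> 'a list set" where
  "Pcode n C i = (if i = 0 then {zero_vec 0} else if i = n then C else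
     {take i c | c. c \<in> C \<and> drop i c = zero_vec (n - i)})"

definition Fcode :: "nat \<Rightarrow> 'a::zero list set \<Rightarrow> nat \<Rightarrow> 'a list set" where
  "Fcode n C i = (if i = n then {zero_vec 0} else if i = 0 then C else
     {drop i c | c. c \<in> C \<and> take i c = zero_vec i})"

end

theory Submission
  imports Defs
begin

lemma Pcode_alt:
  assumes "linear_code n C" "i \<le> n"
  shows "Pcode n C i = {take i c | c. c \<in> C \<and> drop i c = zero_vec (n - i)}"
proof -
  have sub: "C \<subseteq> vecs n" and z: "zero_vec n \<in> C" using assms(1) by (auto simp: linear_code_def)
  show ?thesis
  proof (cases "i = 0")
    case True
    have "{take i c | c. c \<in> C \<and> drop i c = zero_vec (n - i)} = {[]}"
      using True z by (auto simp: zero_vec_def)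
    then show ?thesis using True by (simp add: Pcode_def zero_vec_def)
  next
    case False
    show ?thesis
    proof (cases "i = n")
      case True
      have "{take i c | c. c \<in> C \<and> drop i c = zero_vec (n - i)} = C"
        using True sub by (force simp: zero_vec_def vecs_def)
      then show ?thesis using True False by (simp add: Pcode_def)
    qed (use False in \<open>simp add: Pcode_def\<close>)
  qed
qed

lemma Fcode_alt:
  assumes "linear_code n C" "i \<le> n"
  shows "Fcode n C i = {drop i c | c. c \<in> C \<and> take i c = zero_vec i}"
proof -
  have sub: "C \<subseteq> vecs n" and z: "zero_vec n \<in> C" using assms(1) by (auto simp: linear_code_def)
  show ?thesis
  proof (cases "i = n")
    case True
    have "{drop i c | c. c \<in> C \<and> take i c = zero_vec i} = {[]}"
      using True z sub by (force simp: zero_vec_def vecs_def)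
    then show ?thesis using True by (simp add: Fcode_def zero_vec_def)
  next
    case False
    show ?thesis
    proof (cases "i = 0")
      case True
      have "{drop i c | c. c \<in> C \<and> take i c = zero_vec i} = C"
        using True by (force simp: zero_vec_def)
      then show ?thesis using True False by (simp add: Fcode_def)
    qed (use False in \<open>simp add: Fcode_def\<close>)
  qed
qed

lemma drop_split:
  assumes "length (c::'a::zero list) = n" "1 \<le> i" "i \<le> n"
  shows "(drop (i - 1) c = zero_vec (n - (i - 1))) \<longleftrightarrow> (c ! (i - 1) = 0 \<and> drop i c = zero_vec (n - i))"
proof -
  have "drop (i - 1) c = c ! (i - 1) # drop i c"
  proof -
    have "i - 1 < length c" using assms by simp
    then have "drop (i - 1) c = c ! (i - 1) # drop (Suc (i - 1)) c" by (rule Cons_nth_drop_Suc[symmetric])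
    then show ?thesis using assms by simp
  qed
  moreover have "zero_vec (n - (i - 1)) = (0::'a) # zero_vec (n - i)"
    proof -
    have "n - (i - 1) = Suc (n - i)" using assms by simp
    then show ?thesis by (simp add: zero_vec_def)
  qed
  ultimately show ?thesis by simp
qed

lemma take_split:
  assumes "length (c::'a::zero list) = n" "1 \<le> i" "i \<le> n"
  shows "take i c = take (i - 1) c @ [c ! (i - 1)]"
    "zero_vec i = zero_vec (i - 1) @ [(0::'a)]"
proof -
  show "take i c = take (i - 1) c @ [c ! (i - 1)]"
  proof -
    have "i - 1 < length c" using assms by simp
    then have "take (Suc (i - 1)) c = take (i - 1) c @ [c ! (i - 1)]" by (rule take_Suc_conv_app_nth)
    then show ?thesis using assms by simp
  qed
  show "zero_vec i = zero_vec (i - 1) @ [(0::'a)]"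
  proof -
    have "replicate (Suc (i - 1)) (0::'a) = replicate (i - 1) 0 @ [0]" by (simp add: replicate_append_same)
    then show ?thesis using assms by (simp add: zero_vec_def)
  qed
qed

lemma P_eq:
  assumes lc: "linear_code n C" and i: "1 \<le> i" "i \<le> n"
    and h: "\<forall>c\<in>C. drop i c = zero_vec (n - i) \<longrightarrow> c ! (i - 1) = 0"
  shows "Pcode n C i = {p @ [0] | p. p \<in> Pcode n C (i - 1)}"
proof -
  have len: "\<And>c. c \<in> C \<Longrightarrow> length c = n" using lc by (auto simp: linear_code_def vecs_def)
  show ?thesis
    unfolding Pcode_alt[OF lc i(2)] Pcode_alt[OF lc, of "i - 1", OF diff_le_self[THEN order_trans, OF i(2)]]
  proof (intro set_eqI iffI)
    fix p assume "p \<in> {take i c | c. c \<in> C \<and> drop i c = zero_vec (n - i)}"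
    then obtain c where c: "c \<in> C" "drop i c = zero_vec (n - i)" "p = take i c" by auto
    have 0: "c ! (i - 1) = 0" using h c by auto
    have "drop (i - 1) c = zero_vec (n - (i - 1))" using drop_split[OF len[OF c(1)] i] c 0 by simp
    moreover have "p = take (i - 1) c @ [0]" using take_split(1)[OF len[OF c(1)] i] c 0 by simp
    ultimately show "p \<in> {p @ [0] | p. p \<in> {take (i - 1) c | c. c \<in> C \<and> drop (i - 1) c = zero_vec (n - (i - 1))}}"
      using c(1) by blast
  next
    fix p assume "p \<in> {p @ [0] | p. p \<in> {take (i - 1) c | c. c \<in> C \<and> drop (i - 1) c = zero_vec (n - (i - 1))}}"
    then obtain c where c: "c \<in> C" "drop (i - 1) c = zero_vec (n - (i - 1))" "p = take (i - 1) c @ [0]" by auto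
    have "c ! (i - 1) = 0" "drop i c = zero_vec (n - i)" using drop_split[OF len[OF c(1)] i] c by auto
    moreover then have "p = take i c" using take_split(1)[OF len[OF c(1)] i] c by simp
    ultimately show "p \<in> {take i c | c. c \<in> C \<and> drop i c = zero_vec (n - i)}" using c(1) by blast
  qed
qed

lemma F_eq:
  assumes lc: "linear_code n C" and i: "1 \<le> i" "i \<le> n"
    and h: "\<forall>c\<in>C. take (i - 1) c = zero_vec (i - 1) \<longrightarrow> c ! (i - 1) = 0"
  shows "Fcode n C (i - 1) = {0 # p | p. p \<in> Fcode n C i}"
proof -
  have len: "\<And>c. c \<in> C \<Longrightarrow> length c = n" using lc by (auto simp: linear_code_def vecs_def)
  have dd: "\<And>c. c \<in> C \<Longrightarrow> drop (i - 1) c = c ! (i - 1) # drop i c"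
  proof -
    fix c assume "c \<in> C"
    then have "i - 1 < length c" using i len by simp
    then have "drop (i - 1) c = c ! (i - 1) # drop (Suc (i - 1)) c" by (rule Cons_nth_drop_Suc[symmetric])
    then show "drop (i - 1) c = c ! (i - 1) # drop i c" using i by simp
  qed
  show ?thesis
    unfolding Fcode_alt[OF lc i(2)] Fcode_alt[OF lc, of "i - 1", OF diff_le_self[THEN order_trans, OF i(2)]]
  proof (intro set_eqI iffI)
    fix p assume "p \<in> {drop (i - 1) c | c. c \<in> C \<and> take (i - 1) c = zero_vec (i - 1)}"
    then obtain c where c: "c \<in> C" "take (i - 1) c = zero_vec (i - 1)" "p = drop (i - 1) c" by auto
    have 0: "c ! (i - 1) = 0" using h c by auto
    have "take i c = zero_vec i" using take_split[OF len[OF c(1)] i] c 0 by simp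
    moreover have "p = 0 # drop i c" using dd[OF c(1)] c 0 by simp
    ultimately show "p \<in> {0 # p | p. p \<in> {drop i c | c. c \<in> C \<and> take i c = zero_vec i}}"
      using c(1) by blast
  next
    fix p assume "p \<in> {0 # p | p. p \<in> {drop i c | c. c \<in> C \<and> take i c = zero_vec i}}"
    then obtain c where c: "c \<in> C" "take i c = zero_vec i" "p = 0 # drop i c" by auto
    have "c ! (i - 1) = 0" "take (i - 1) c = zero_vec (i - 1)" using take_split[OF len[OF c(1)] i] c by auto
    moreover then have "p = drop (i - 1) c" using dd[OF c(1)] c by simp
    ultimately show "p \<in> {drop (i - 1) c | c. c \<in> C \<and> take (i - 1) c = zero_vec (i - 1)}" using c(1) by blast
  qed
qed

theorem proposition4p2:
  fixes C :: "'a::{finite,field} list set" and n k d :: nat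
  assumes "nkd_code n k d C"
    and "formally_self_orthogonal n C"
    and "1 \<le> i" and "i \<le> n"
  shows "Pcode n C i = {c @ [0] | c. c \<in> Pcode n C (i - 1)}
         \<or> Fcode n C (i - 1) = {0 # c | c. c \<in> Fcode n C i}"
proof (rule ccontr)
  assume neg: "\<not> ?thesis"
  have lc: "linear_code n C" using assms(1) by (simp add: nkd_code_def)
  have len: "\<And>c. c \<in> C \<Longrightarrow> length c = n" using lc by (auto simp: linear_code_def vecs_def)
  obtain c where c: "c \<in> C" "drop i c = zero_vec (n - i)" "c ! (i - 1) \<noteq> 0"
    using P_eq[OF lc assms(3,4)] neg by blast
  obtain c' where c': "c' \<in> C" "take (i - 1) c' = zero_vec (i - 1)" "c' ! (i - 1) \<noteq> 0"
    using F_eq[OF lc assms(3,4)] neg by blast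
  obtain x where x: "length x = n" "\<forall>j<n. x ! j \<noteq> 0" "C \<subseteq> cmult x ` dual_code n C"
    using assms(2) by (auto simp: formally_self_orthogonal_def)
  obtain y where y: "y \<in> dual_code n C" "c = cmult x y" using x(3) c(1) by auto
  have ly: "length y = n" using y(1) by (simp add: dual_code_def vecs_def)
  have dot0: "dot c' y = 0" using y(1) c'(1) by (simp add: dual_code_def)
  have cj: "\<And>j. j < n \<Longrightarrow> c ! j = x ! j * y ! j" using y(2) x(1) ly by (simp add: cmult_def)
  have "dot c' y = (\<Sum>j<n. c' ! j * y ! j)"
    unfolding dot_def using len[OF c'(1)] ly by (simp add: sum_list_sum_nth atLeast0LessThan)
  also have "\<dots> = c' ! (i - 1) * y ! (i - 1) + (\<Sum>j\<in>{..<n} - {i - 1}. c' ! j * y ! j)"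
    by (rule sum.remove) (use assms(3,4) in auto)
  also have "(\<Sum>j\<in>{..<n} - {i - 1}. c' ! j * y ! j) = 0"
  proof (rule sum.neutral, intro ballI)
    fix j assume jm: "j \<in> {..<n} - {i - 1}"
    then have j: "j \<noteq> i - 1" and True: "j < n" by auto
    show "c' ! j * y ! j = 0"
    proof (cases "j < i - 1")
      case True
      have "take (i - 1) c' ! j = 0" using c'(2) True by (simp add: zero_vec_def)
      then show ?thesis using True by simp
    next
      case False
      have "j \<ge> i" using False j by simp
      then have "drop i c ! (j - i) = 0" using c(2) True by (simp add: zero_vec_def)
      then have "c ! j = 0" using \<open>j \<ge> i\<close> len[OF c(1)] True by simp
      then have "y ! j = 0" using cj[OF True] x(2) True by simp
      then show ?thesis by simp
    qed
  qed
  finally have "c' ! (i - 1) * y ! (i - 1) = 0" using dot0 by simp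
  moreover have "y ! (i - 1) \<noteq> 0" using cj[of "i - 1"] c(3) assms(3,4) by auto
  ultimately show False using c'(3) by simp
qed

end
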